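(* Let $W$ be a matrix weight. For all $J\in\mathcal{D}$ and $1\le j\le d$, \[ \|W(J_-)^{1/2}h_J^{W,j}(J_-)\|_{\mathbb{C}^d}\le C(d),\qquad \|W(J_+)^{1/2}h_J^{W,j}(J_+)\|_{\mathbb{C}^d}\le C(d), \] where $C(d)$ depends only on $d$ and $h_J^{W,j}(J_\pm)$ denotes the constant value of $h_J^{W,j}$ on $J_\pm$.
   Context: A matrix weight is a $d\times d$ matrix-valued function on $\mathbb{R}$, positive definite a.e., with locally integrable entries. $\mathcal{D}$ is the standard dyadic grid, $J_\pm$ the right/left halves of $J$, $W(J)=\int_JW$. For $J\in\mathcal{D}$ let $v_J^1,\dots,v_J^d$ be an orthonormal eigenbasis of the positive definite matrix $W(J)W(J_+)^{-1}W(J_-)=W(J_-)W(J_+)^{-1}W(J_-)+W(J_-)$, $w_J^j=\|(W(J)W(J_+)^{-1}W(J_-))^{1/2}v_J^j\|$, and $h_J^{W,j}=(w_J^j)^{-1}\big(W(J_+)^{-1}W(J_-)v_J^j\mathbf{1}_{J_+}-v_J^j\mathbf{1}_{J_-}\big)$. *)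

theory Defs
  imports "HOL-Analysis.Analysis"
begin

(* d x d complex matrices: complex^'n^'n, with d = CARD('n). *)

definition cinner :: "complex^'n \<Rightarrow> complex^'n \<Rightarrow> complex" where
  "cinner v w = (\<Sum>i\<in>UNIV. cnj (v $ i) * w $ i)"

definition adjoint_mat :: "complex^'n^'n \<Rightarrow> complex^'n^'n" where
  "adjoint_mat A = (\<chi> i k. cnj (A $ k $ i))"

definition hermitian_mat :: "complex^'n^'n \<Rightarrow> bool" where
  "hermitian_mat A \<longleftrightarrow> adjoint_mat A = A"

definition pos_def_mat :: "complex^'n^'n \<Rightarrow> bool" where
  "pos_def_mat A \<longleftrightarrow> hermitian_mat A \<and> (\<forall>v. v \<noteq> 0 \<longrightarrow> Re (cinner v (A *v v)) > 0)"

definition pos_semidef_mat :: "complex^'n^'n \<Rightarrow> bool" where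
  "pos_semidef_mat A \<longleftrightarrow> hermitian_mat A \<and> (\<forall>v. Re (cinner v (A *v v)) \<ge> 0)"

definition msqrt :: "complex^'n^'n \<Rightarrow> complex^'n^'n" where
  "msqrt A = (THE B. pos_semidef_mat B \<and> B ** B = A)"

definition matrix_weight :: "(real \<Rightarrow> complex^'n^'n) \<Rightarrow> bool" where
  "matrix_weight W \<longleftrightarrow>
     (\<forall>i k a b. set_integrable lborel {a..b} (\<lambda>x. W x $ i $ k)) \<and>
     (AE x in lborel. pos_def_mat (W x))"

definition Wint :: "(real \<Rightarrow> complex^'n^'n) \<Rightarrow> real set \<Rightarrow> complex^'n^'n" where
  "Wint W J = (\<chi> i k. LINT x:J|lborel. W x $ i $ k)"

definition dyadic_interval :: "int \<Rightarrow> int \<Rightarrow> real set" where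
  "dyadic_interval n k = {real_of_int k * 2 powr (- real_of_int n) ..< (real_of_int k + 1) * 2 powr (- real_of_int n)}"

definition dyadic_grid :: "real set set" where
  "dyadic_grid = {dyadic_interval n k | n k. True}"

definition left_half :: "real set \<Rightarrow> real set" where
  "left_half J = {Inf J ..< (Inf J + Sup J) / 2}"

definition right_half :: "real set \<Rightarrow> real set" where
  "right_half J = {(Inf J + Sup J) / 2 ..< Sup J}"

definition haar_mat :: "(real \<Rightarrow> complex^'n^'n) \<Rightarrow> real set \<Rightarrow> complex^'n^'n" where
  "haar_mat W J = Wint W J ** matrix_inv (Wint W (right_half J)) ** Wint W (left_half J)"

definition orthonormal_eigenbasis :: "complex^'n^'n \<Rightarrow> ('n \<Rightarrow> complex^'n) \<Rightarrow> bool" where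
  "orthonormal_eigenbasis A v \<longleftrightarrow>
     (\<forall>i j. cinner (v i) (v j) = (if i = j then 1 else 0)) \<and>
     (\<forall>j. \<exists>c. A *v v j = c *s v j)"

definition haar_w :: "(real \<Rightarrow> complex^'n^'n) \<Rightarrow> real set \<Rightarrow> ('n \<Rightarrow> complex^'n) \<Rightarrow> 'n \<Rightarrow> real" where
  "haar_w W J v j = norm (msqrt (haar_mat W J) *v v j)"

text \<open>Constant value of h_J^{W,j} on J_+ and on J_-.\<close>
definition haar_plus :: "(real \<Rightarrow> complex^'n^'n) \<Rightarrow> real set \<Rightarrow> ('n \<Rightarrow> complex^'n) \<Rightarrow> 'n \<Rightarrow> complex^'n" where
  "haar_plus W J v j = complex_of_real (inverse (haar_w W J v j)) *s
     (matrix_inv (Wint W (right_half J)) ** Wint W (left_half J) *v v j)"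

definition haar_minus :: "(real \<Rightarrow> complex^'n^'n) \<Rightarrow> real set \<Rightarrow> ('n \<Rightarrow> complex^'n) \<Rightarrow> 'n \<Rightarrow> complex^'n" where
  "haar_minus W J v j = complex_of_real (inverse (haar_w W J v j)) *s (- v j)"

end

theory Submission
  imports Defs
begin


lemma inner_cinner: "inner (x::complex^'n) y = Re (cinner x y)"
  by (simp add: inner_vec_def cinner_def inner_complex_def Re_sum)

lemma cinner_commute: "cinner y x = cnj (cinner x (y::complex^'n))"
  by (simp add: cinner_def mult.commute)

lemma cinner_self: "cinner x x = complex_of_real ((norm (x::complex^'n))^2)"
proof -
  have "cinner x x = (\<Sum>i\<in>UNIV. complex_of_real ((cmod (x$i))^2))"
    unfolding cinner_def by (intro sum.cong refl) (metis complex_norm_square mult.commute)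
  also have "\<dots> = complex_of_real ((norm x)^2)"
    by (simp only: norm_vec_def L2_set_def real_sqrt_pow2 sum_nonneg zero_le_power2 of_real_sum norm_complex_def)
  finally show ?thesis .
qed

lemma Re_cinner_self: "Re (cinner x x) = (norm (x::complex^'n))^2"
  by (simp add: cinner_self)

lemma cinner_add_left: "cinner (x + y) z = cinner x z + cinner y (z::complex^'n)"
  by (simp add: cinner_def sum.distrib distrib_right)
lemma cinner_add_right: "cinner z (x + y) = cinner z x + cinner z (y::complex^'n)"
  by (simp add: cinner_def sum.distrib distrib_left)
lemma cinner_diff_left: "cinner (x - y) z = cinner x z - cinner y (z::complex^'n)"
  by (simp add: cinner_def sum_subtractf left_diff_distrib)
lemma cinner_diff_right: "cinner z (x - y) = cinner z x - cinner z (y::complex^'n)"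
  by (simp add: cinner_def sum_subtractf right_diff_distrib)
lemma cinner_smult_left: "cinner (c *s x) y = cnj c * cinner x (y::complex^'n)"
  by (simp add: cinner_def sum_distrib_left mult.assoc)
lemma cinner_smult_right: "cinner x (c *s y) = c * cinner x (y::complex^'n)"
  by (simp add: cinner_def sum_distrib_left mult.assoc mult.left_commute)
lemma cinner_scaleR_left: "cinner (t *\<^sub>R x) y = complex_of_real t * cinner x (y::complex^'n)"
  unfolding cinner_def sum_distrib_left vector_scaleR_component by (intro sum.cong refl) (simp add: scaleR_conv_of_real)
lemma cinner_scaleR_right: "cinner x (t *\<^sub>R y) = complex_of_real t * cinner x (y::complex^'n)"
  unfolding cinner_def sum_distrib_left vector_scaleR_component by (intro sum.cong refl) (simp add: scaleR_conv_of_real)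
lemma cinner_zero_left[simp]: "cinner 0 x = 0" by (simp add: cinner_def)
lemma cinner_zero_right[simp]: "cinner x 0 = 0" by (simp add: cinner_def)
lemma cinner_sum_right: "finite S \<Longrightarrow> cinner x (\<Sum>u\<in>S. f u) = (\<Sum>u\<in>S. cinner x (f u :: complex^'n))"
  by (induction S rule: finite_induct) (auto simp: cinner_add_right)
lemma cinner_sum_left: "finite S \<Longrightarrow> cinner (\<Sum>u\<in>S. f u) x = (\<Sum>u\<in>S. cinner (f u :: complex^'n) x)"
  by (induction S rule: finite_induct) (auto simp: cinner_add_left)

lemma cinner_adj: "cinner x (A *v y) = cinner (adjoint_mat A *v x) (y::complex^'n)"
proof -
  have "cinner x (A *v y) = (\<Sum>i\<in>UNIV. \<Sum>k\<in>UNIV. cnj (x$i) * A$i$k * y$k)"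
    by (simp add: cinner_def matrix_vector_mult_def sum_distrib_left mult.assoc)
  also have "\<dots> = (\<Sum>k\<in>UNIV. \<Sum>i\<in>UNIV. cnj (x$i) * A$i$k * y$k)" by (rule sum.swap)
  also have "\<dots> = cinner (adjoint_mat A *v x) y"
    by (simp add: cinner_def matrix_vector_mult_def adjoint_mat_def sum_distrib_right sum_distrib_left mult.commute mult.left_commute)
  finally show ?thesis .
qed

lemma adjoint_adjoint[simp]: "adjoint_mat (adjoint_mat A) = (A::complex^'n^'n)"
  by (simp add: adjoint_mat_def vec_eq_iff)

lemma adjoint_mult: "adjoint_mat (A ** B) = adjoint_mat B ** adjoint_mat (A::complex^'n^'n)"
  by (simp add: adjoint_mat_def matrix_matrix_mult_def vec_eq_iff mult.commute)

lemma herm_cinner: "hermitian_mat A \<Longrightarrow> cinner x (A *v y) = cinner (A *v x) (y::complex^'n)"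
  by (simp add: cinner_adj hermitian_mat_def)

lemma herm_inner: "hermitian_mat A \<Longrightarrow> inner x (A *v y) = inner (A *v x) (y::complex^'n)"
  by (simp add: inner_cinner herm_cinner)

lemma herm_quad_real: "hermitian_mat A \<Longrightarrow> cinner x (A *v x) = complex_of_real (inner x (A *v (x::complex^'n)))"
proof -
  assume h: "hermitian_mat A"
  have "cinner x (A *v x) = cnj (cinner x (A *v x))"
    by (metis cinner_commute h herm_cinner)
  hence "Im (cinner x (A *v x)) = 0" by (metis Reals_cnj_iff complex_is_Real_iff)
  thus ?thesis by (simp add: inner_cinner complex_eq_iff)
qed

lemma mat_eq_cols: "(\<And>x. A *v x = B *v x) \<Longrightarrow> (A::complex^'n^'m) = B"
  using matrix_eq by blast



lemma quad_nonneg_lin0: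
  fixes a b :: real
  assumes "\<And>t. 0 \<le> a*t^2 + b*t"
  shows "b = 0"
proof (rule ccontr)
  assume "b \<noteq> 0"
  define t where "t = - b / (2 * (\<bar>a\<bar> + 1))"
  have pos: "\<bar>a\<bar> + 1 > 0" by simp
  have "a*t^2 + b*t \<le> \<bar>a\<bar>*t^2 + b*t" by (simp add: mult_right_mono power2_eq_square)
  also have "\<dots> < (\<bar>a\<bar> + 1)*t^2 + b*t" using \<open>b\<noteq>0\<close> pos by (simp add: t_def)
  also have "\<dots> = -(b^2) / (4 *(\<bar>a\<bar> + 1))"
  proof -
    have "\<And>c::real. c > 0 \<Longrightarrow> c * (- b / (2 * c))^2 + b * (- b / (2 * c)) = -(b^2) / (4 * c)"
      by (simp add: field_simps power2_eq_square)
    thus ?thesis using pos unfolding t_def by blast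
  qed
  also have "\<dots> \<le> 0" using pos by simp
  finally show False using assms[of t] by simp
qed

lemma mv_scaleR: "A *v (c *\<^sub>R x) = c *\<^sub>R (A *v (x::complex^'n))" for A :: "complex^'n^'m"
  using linear_iff matrix_vector_mul_linear by blast
lemma mv_smult: "A *v (c *s x) = c *s (A *v (x::complex^'n))" for A :: "complex^'n^'m"
  by (simp add: vec_eq_iff matrix_vector_mult_def sum_distrib_left mult_ac)

lemma herm_expand:
  assumes h: "hermitian_mat A"
  shows "inner (x + t *\<^sub>R y) (A *v (x + t *\<^sub>R y)) =
     inner x (A *v x) + 2*t*inner y (A *v (x::complex^'n)) + t^2 * inner y (A *v y)"
proof -
  have s: "inner x (A *v y) = inner y (A *v x)"
    using herm_inner[OF h] by (metis inner_commute)
  show ?thesis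
    by (simp add: matrix_vector_right_distrib mv_scaleR inner_add_left inner_add_right s power2_eq_square algebra_simps)
qed

lemma psd_herm: "pos_semidef_mat A \<Longrightarrow> hermitian_mat A"
  by (simp add: pos_semidef_mat_def)
lemma psd_nonneg: "pos_semidef_mat A \<Longrightarrow> 0 \<le> inner x (A *v x)"
  by (simp add: pos_semidef_mat_def inner_cinner)
lemma pd_psd: "pos_def_mat A \<Longrightarrow> pos_semidef_mat A"
  unfolding pos_def_mat_def pos_semidef_mat_def by (metis cinner_zero_left less_le order_refl zero_complex.sel(1))
lemma pd_pos: "pos_def_mat A \<Longrightarrow> x \<noteq> 0 \<Longrightarrow> 0 < inner x (A *v x)"
  by (simp add: pos_def_mat_def inner_cinner)

lemma psd_zero:
  assumes p: "pos_semidef_mat P" and z: "inner z (P *v z) = 0"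
  shows "P *v (z::complex^'n) = 0"
proof -
  have h: "hermitian_mat P" using p psd_herm by blast
  have "\<And>t. 0 \<le> inner (P *v z) (P *v (P *v z)) * t^2 + 2 * inner (P *v z) (P *v z) * t"
  proof -
    fix t :: real
    have "0 \<le> inner (z + t *\<^sub>R (P *v z)) (P *v (z + t *\<^sub>R (P *v z)))" by (rule psd_nonneg[OF p])
    thus "0 \<le> inner (P *v z) (P *v (P *v z)) * t^2 + 2 * inner (P *v z) (P *v z) * t"
      unfolding herm_expand[OF h] z by (simp add: algebra_simps)
  qed
  from quad_nonneg_lin0[OF this] show ?thesis by simp
qed

lemma pd_inj: "pos_def_mat A \<Longrightarrow> A *v x = 0 \<Longrightarrow> (x::complex^'n) = 0"
  using pd_pos by fastforce

lemma pd_invertible: "pos_def_mat (A::complex^'n^'n) \<Longrightarrow> invertible A"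
  by (metis invertible_left_inverse matrix_left_invertible_ker pd_inj)

lemma inv_props:
  assumes "invertible (A::complex^'n^'n)"
  shows "A ** matrix_inv A = mat 1" "matrix_inv A ** A = mat 1"
proof -
  have "\<exists>A'. A ** A' = mat 1 \<and> A' ** A = mat 1" using assms invertible_def by blast
  from someI_ex[OF this] show "A ** matrix_inv A = mat 1" "matrix_inv A ** A = mat 1"
    unfolding matrix_inv_def by auto
qed

lemma adjoint_mat1[simp]: "adjoint_mat (mat 1 :: complex^'n^'n) = mat 1"
  by (simp add: adjoint_mat_def mat_def vec_eq_iff)

lemma herm_inv:
  assumes h: "hermitian_mat A" and i: "invertible (A::complex^'n^'n)"
  shows "hermitian_mat (matrix_inv A)"
proof -
  have "adjoint_mat (matrix_inv A) ** A = mat 1"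
    using inv_props(1)[OF i] adjoint_mult[of A "matrix_inv A"] h
    by (metis adjoint_mat1 hermitian_mat_def)
  hence "adjoint_mat (matrix_inv A) = adjoint_mat (matrix_inv A) ** (A ** matrix_inv A)"
    using inv_props(1)[OF i] by simp
  also have "\<dots> = matrix_inv A"
    by (metis \<open>adjoint_mat (matrix_inv A) ** A = mat 1\<close> matrix_mul_assoc matrix_mul_lid)
  finally show ?thesis by (simp add: hermitian_mat_def)
qed



lemma mult_ind: "(a::complex) * (if P then 1 else 0) = (if P then a else 0)"
  "cnj (if P then 1 else 0) * a = (if P then a else 0)" by auto

lemma diag_cinner: "M $ i $ i = cinner (axis i 1) ((M::complex^'n^'n) *v axis i 1)"
  by (simp add: cinner_def matrix_vector_mult_def axis_def mult_ind)

lemma mat_mul_zero: "(A::complex^'n^'n) ** 0 = 0"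
  by (simp add: matrix_matrix_mult_def vec_eq_iff)

lemma cols_zero: "(\<And>i. A *v axis i 1 = 0) \<Longrightarrow> (A::complex^'n^'n) = 0"
proof -
  assume a: "\<And>i. A *v axis i 1 = 0"
  have "A $ j $ i = (A *v axis i 1) $ j" for i j
    by (simp add: matrix_vector_mult_def axis_def mult_ind)
  thus ?thesis using a by (simp add: vec_eq_iff)
qed

lemma adjoint_diff: "adjoint_mat (A - B) = adjoint_mat A - adjoint_mat (B::complex^'n^'n)"
  by (simp add: adjoint_mat_def vec_eq_iff)

lemma trace_quad:
  assumes h: "hermitian_mat D"
  shows "Re (trace (D ** (M ** D))) = (\<Sum>i\<in>UNIV. inner (D *v axis i 1) (M *v (D *v axis i (1::complex))))"
proof -
  have "trace (D ** (M ** D)) = (\<Sum>i\<in>UNIV. cinner (D *v axis i 1) (M *v (D *v axis i 1)))"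
    unfolding trace_def diag_cinner
    by (intro sum.cong refl) (simp add: matrix_vector_mul_assoc[symmetric] herm_cinner[OF h])
  thus ?thesis by (simp add: Re_sum inner_cinner)
qed

lemma psd_sqrt_unique:
  assumes B: "pos_semidef_mat B" and C: "pos_semidef_mat C" and e: "B ** B = C ** (C::complex^'n^'n)"
  shows "B = C"
proof -
  define D where "D = B - C"
  have hD: "hermitian_mat D" using B C unfolding D_def hermitian_mat_def pos_semidef_mat_def
    by (simp add: adjoint_diff)
  have key: "D ** B + C ** D = 0"
  proof (rule mat_eq_cols)
    fix x
    have "B *v (B *v x) = C *v (C *v x)" using e by (simp add: matrix_vector_mul_assoc)
    thus "(D ** B + C ** D) *v x = 0 *v x"
      by (simp add: D_def matrix_vector_mult_add_rdistrib matrix_vector_mult_diff_rdistrib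
          matrix_vector_mul_assoc[symmetric] matrix_vector_mult_diff_distrib)
  qed
  have "trace (D ** (D ** B)) + trace (D ** (C ** D)) = 0"
    using key by (metis matrix_add_ldistrib trace_add mat_mul_zero trace_0 mat_0)
  moreover have "trace (D ** (D ** B)) = trace (D ** (B ** D))"
    by (metis matrix_mul_assoc trace_mul_sym)
  ultimately have "Re (trace (D ** (B ** D))) + Re (trace (D ** (C ** D))) = 0"
    by (metis plus_complex.sel(1) zero_complex.sel(1))
  hence s0: "(\<Sum>i\<in>UNIV. inner (D *v axis i 1) (B *v (D *v axis i 1))) +
          (\<Sum>i\<in>UNIV. inner (D *v axis i 1) (C *v (D *v axis i (1::complex)))) = 0"
    unfolding trace_quad[OF hD] .
  have nB: "\<And>i. 0 \<le> inner (D *v axis i 1) (B *v (D *v axis i (1::complex)))" using psd_nonneg[OF B] by blast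
  have nC: "\<And>i. 0 \<le> inner (D *v axis i 1) (C *v (D *v axis i (1::complex)))" using psd_nonneg[OF C] by blast
  have sB: "(\<Sum>i\<in>UNIV. inner (D *v axis i 1) (B *v (D *v axis i (1::complex)))) = 0"
    using s0 nB nC by (smt (verit) sum_nonneg)
  have sC: "(\<Sum>i\<in>UNIV. inner (D *v axis i 1) (C *v (D *v axis i (1::complex)))) = 0"
    using s0 nB nC by (smt (verit) sum_nonneg)
  have zB: "B *v (D *v axis i 1) = 0" for i
    using sB nB by (intro psd_zero[OF B]) (simp add: sum_nonneg_eq_0_iff)
  have zC: "C *v (D *v axis i 1) = 0" for i
    using sC nC by (intro psd_zero[OF C]) (simp add: sum_nonneg_eq_0_iff)
  have "D *v (D *v axis i 1) = 0" for i
    using zB[of i] zC[of i] by (simp add: D_def matrix_vector_mult_diff_rdistrib)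
  hence "D *v axis i 1 = 0" for i
  proof -
    have "inner (D *v axis i 1) (D *v axis i 1) = inner (axis i 1) (D *v (D *v axis i (1::complex)))"
      using herm_inner[OF hD] by (metis inner_commute)
    thus ?thesis using \<open>D *v (D *v axis i 1) = 0\<close> by simp
  qed
  hence "D = 0" by (rule cols_zero)
  thus ?thesis by (simp add: D_def)
qed



definition onb :: "(complex^'n) set \<Rightarrow> bool" where
  "onb U \<longleftrightarrow> (\<forall>u\<in>U. \<forall>w\<in>U. cinner u w = (if u = w then 1 else 0))"

lemma cinner_ii: "cinner x (\<i> *s y) = \<i> * cinner x (y::complex^'n)" "cinner (\<i> *s x) y = - \<i> * cinner x (y::complex^'n)"
  by (simp_all add: cinner_smult_left cinner_smult_right)

lemma onb_card_aux:
  assumes o: "onb (U::(complex^'n) set)"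
  shows "finite U \<and> 2 * card U \<le> 2 * CARD('n)"
proof -
  define V where "V = U \<union> (\<lambda>u. \<i> *s u) ` U"
  have c1: "inner u w = (if u = w then 1 else 0)" if "u \<in> U" "w \<in> U" for u w
    using o that unfolding onb_def inner_cinner by simp
  have c2: "inner u (\<i> *s w) = 0" if "u \<in> U" "w \<in> U" for u w
    using o that unfolding onb_def inner_cinner by (simp add: cinner_smult_right)
  have c3: "inner (\<i> *s u) w = 0" if "u \<in> U" "w \<in> U" for u w
    using o that unfolding onb_def inner_cinner by (simp add: cinner_smult_left)
  have injI: "\<And>u w. \<i> *s u = \<i> *s w \<Longrightarrow> u = (w::complex^'n)"
    by (simp add: vec_eq_iff)
  have c4: "inner (\<i> *s u) (\<i> *s w) = (if \<i> *s u = \<i> *s w then 1 else 0)" if "u \<in> U" "w \<in> U" for u w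
  proof -
    have "inner (\<i> *s u) (\<i> *s w) = inner u w"
      unfolding inner_cinner by (simp add: cinner_smult_left cinner_smult_right)
    thus ?thesis using c1[OF that] injI by auto
  qed
  have neq: "u \<noteq> \<i> *s w" if "u \<in> U" "w \<in> U" for u w
    using c1[OF that(1) that(1)] c2[OF that(1) that(2)] by auto
  have ip: "inner x y = (if x = y then 1 else 0)" if xV: "x \<in> V" and yV: "y \<in> V" for x y
  proof -
    consider (a) "x \<in> U" | (b) u where "u \<in> U" "x = \<i> *s u" using xV V_def by auto
    then show ?thesis
    proof cases
      case a
      consider (a') "y \<in> U" | (b') w where "w \<in> U" "y = \<i> *s w" using yV V_def by auto
      then show ?thesis
      proof cases
        case a' then show ?thesis using a c1 by blast
      next
        case b' then show ?thesis using a c2 neq by auto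
      qed
    next
      case b
      consider (a') "y \<in> U" | (b') w where "w \<in> U" "y = \<i> *s w" using yV V_def by auto
      then show ?thesis
      proof cases
        case a' then show ?thesis using b c3 neq by auto
      next
        case b' then show ?thesis using b c4 by blast
      qed
    qed
  qed
  have "pairwise orthogonal V" using ip unfolding pairwise_def orthogonal_def by auto
  moreover have "0 \<notin> V" using ip by fastforce
  ultimately have "independent V" by (rule pairwise_orthogonal_independent)
  from independent_bound[OF this] have fV: "finite V" and cV: "card V \<le> 2 * CARD('n)"
    by (auto simp: DIM_cart)
  have fU: "finite U" using fV V_def by auto
  have inj: "inj_on (\<lambda>u. \<i> *s u) U" using injI by (meson inj_onI)
  have disj: "U \<inter> (\<lambda>u. \<i> *s u) ` U = {}" using neq by blast
  have "card V = card U + card U"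
    unfolding V_def using card_Un_disjoint[OF fU _ disj] fU card_image[OF inj] by simp
  thus ?thesis using fU cV by simp
qed

lemma onb_card: "onb (U::(complex^'n) set) \<Longrightarrow> finite U \<and> card U \<le> CARD('n)"
  using onb_card_aux by fastforce



lemma onb_coeff:
  assumes o: "onb U" and f: "finite U" and u: "u \<in> U"
  shows "cinner u (\<Sum>w\<in>U. c w *s w) = c u"
proof -
  have "cinner u (\<Sum>w\<in>U. c w *s w) = (\<Sum>w\<in>U. c w * (if u = w then 1 else 0))"
    using o u unfolding onb_def by (simp add: cinner_sum_right[OF f] cinner_smult_right)
  also have "\<dots> = c u" using f u by (simp add: if_distrib[of "\<lambda>x. _ * x"] cong: if_cong)
  finally show ?thesis .
qed

lemma onb_insert:
  assumes o: "onb U" and n: "norm y = 1" and p: "\<forall>u\<in>U. cinner u y = 0"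
  shows "onb (insert y U)" "y \<notin> U"
proof -
  have yy: "cinner y y = 1" using n by (simp add: cinner_self)
  have py: "\<forall>u\<in>U. cinner y u = 0" using p by (metis cinner_commute complex_cnj_zero)
  show "y \<notin> U" using p yy by auto
  thus "onb (insert y U)" using o yy p py unfolding onb_def by auto
qed

lemma proj_orth:
  assumes o: "onb U" and f: "finite U" and u: "u \<in> U"
  shows "cinner u (x - (\<Sum>w\<in>U. cinner w x *s w)) = 0"
  using onb_coeff[OF o f u, of "\<lambda>w. cinner w x"] by (simp add: cinner_diff_right)

lemma normalize_orth:
  assumes "y \<noteq> 0" "\<forall>u\<in>U. cinner u y = 0"
  shows "norm ((1 / norm y) *\<^sub>R y) = 1" "\<forall>u\<in>U. cinner u ((1 / norm y) *\<^sub>R (y::complex^'n)) = 0"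
  using assms by (auto simp: cinner_scaleR_right)

lemma onb_complete:
  assumes o: "onb (U::(complex^'n) set)" and c: "card U = CARD('n)"
  shows "x = (\<Sum>u\<in>U. cinner u x *s u)"
proof (rule ccontr)
  have f: "finite U" using onb_card[OF o] by simp
  define y where "y = x - (\<Sum>w\<in>U. cinner w x *s w)"
  assume "x \<noteq> (\<Sum>u\<in>U. cinner u x *s u)"
  hence "y \<noteq> 0" by (simp add: y_def)
  moreover have "\<forall>u\<in>U. cinner u y = 0" using proj_orth[OF o f] y_def by simp
  ultimately have n: "norm ((1 / norm y) *\<^sub>R y) = 1" "\<forall>u\<in>U. cinner u ((1 / norm y) *\<^sub>R y) = 0"
    using normalize_orth by blast+
  from onb_insert[OF o n] have "onb (insert ((1 / norm y) *\<^sub>R y) U)" "(1 / norm y) *\<^sub>R y \<notin> U" by auto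
  with onb_card[OF this(1)] f c show False by simp
qed

lemma smult_split: "c *s u = Re c *\<^sub>R u + Im c *\<^sub>R (\<i> *s (u::complex^'n))"
  unfolding vec_eq_iff vector_scaleR_component vector_add_component vector_smult_component
  by (simp add: complex_eq_iff)

lemma onb_extend:
  assumes o: "onb (U::(complex^'n) set)" and c: "card U < CARD('n)"
  shows "\<exists>y. norm y = 1 \<and> (\<forall>u\<in>U. cinner u y = 0)"
proof (rule ccontr)
  assume na: "\<not> ?thesis"
  have f: "finite U" using onb_card[OF o] by simp
  define V where "V = U \<union> (\<lambda>u. \<i> *s u) ` U"
  have fV: "finite V" using f V_def by simp
  have all: "x = (\<Sum>w\<in>U. cinner w x *s w)" for x
  proof (rule ccontr)
    define y where "y = x - (\<Sum>w\<in>U. cinner w x *s w)"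
    assume "x \<noteq> (\<Sum>w\<in>U. cinner w x *s w)"
    hence "y \<noteq> 0" by (simp add: y_def)
    moreover have "\<forall>u\<in>U. cinner u y = 0" using proj_orth[OF o f] y_def by simp
    ultimately have "\<exists>y. norm y = 1 \<and> (\<forall>u\<in>U. cinner u y = 0)" using normalize_orth by metis
    with na show False by blast
  qed
  have "UNIV \<subseteq> span V"
  proof
    fix x :: "complex^'n"
    have "(\<Sum>w\<in>U. cinner w x *s w) \<in> span V"
    proof (rule span_sum)
      fix w assume "w \<in> U"
      hence "w \<in> V" "\<i> *s w \<in> V" using V_def by auto
      thus "cinner w x *s w \<in> span V" apply (subst smult_split)
        by (intro span_add span_scale span_base)
    qed
    thus "x \<in> span V" using all[of x] by simp
  qed
  from dim_le_card[OF this fV] have "DIM(complex^'n) \<le> card V" by (simp add: dim_UNIV)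
  moreover have "card V \<le> card U + card U"
  proof -
    have "card V \<le> card U + card ((\<lambda>u. \<i> *s u) ` U)" unfolding V_def by (rule card_Un_le)
    also have "\<dots> \<le> card U + card U" using card_image_le[OF f, of "\<lambda>u. \<i> *s u"] by simp
    finally show ?thesis .
  qed
  ultimately show False using c by (simp add: DIM_cart)
qed



definition eig :: "complex^'n^'n \<Rightarrow> (complex^'n) set \<Rightarrow> bool" where
  "eig A U \<longleftrightarrow> (\<forall>u\<in>U. A *v u = inner u (A *v u) *\<^sub>R u)"

lemma cont_cinner: "continuous_on UNIV (\<lambda>x. cinner u (x::complex^'n))"
  unfolding cinner_def by (intro continuous_intros)

lemma cont_quad: "continuous_on UNIV (\<lambda>x. inner x (A *v (x::complex^'n)))"
  by (intro continuous_intros linear_continuous_on matrix_vector_mul_bounded_linear)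

lemma rayleigh:
  assumes h: "hermitian_mat A" and o: "onb U" and e: "eig A U"
    and ex: "\<exists>y. norm y = 1 \<and> (\<forall>u\<in>U. cinner u y = 0)"
  shows "\<exists>x. norm x = 1 \<and> (\<forall>u\<in>U. cinner u x = 0) \<and> A *v x = inner x (A *v x) *\<^sub>R (x::complex^'n)"
proof -
  define S where "S = (\<Inter>u\<in>U. {x::complex^'n. cinner u x = 0})"
  have memS: "x \<in> S \<longleftrightarrow> (\<forall>u\<in>U. cinner u x = 0)" for x unfolding S_def by auto
  have cS: "closed S" unfolding S_def
    by (intro closed_INT ballI closed_Collect_eq cont_cinner continuous_on_const)
  define K where "K = S \<inter> sphere 0 1"
  have cK: "compact K" unfolding K_def using closed_Int_compact[OF cS compact_sphere] .
  have neK: "K \<noteq> {}" using ex unfolding K_def by (auto simp: memS)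
  define f where "f = (\<lambda>x. inner x (A *v (x::complex^'n)))"
  have cf: "continuous_on K f" unfolding f_def using cont_quad continuous_on_subset by blast
  obtain x0 where x0K: "x0 \<in> K" and mx: "\<And>y. y \<in> K \<Longrightarrow> f y \<le> f x0"
    using continuous_attains_sup[OF cK neK cf] by blast
  define \<mu> where "\<mu> = f x0"
  have x0S: "x0 \<in> S" and nx0: "norm x0 = 1" using x0K K_def by auto
  have bound: "inner z (A *v z) \<le> \<mu> * inner z z" if zS: "z \<in> S" for z
  proof (cases "z = 0")
    case True thus ?thesis by simp
  next
    case False
    define z' where "z' = (1 / norm z) *\<^sub>R z"
    have "z' \<in> S" using zS unfolding memS z'_def by (simp add: cinner_scaleR_right)
    moreover have "norm z' = 1" using False z'_def by simp
    ultimately have "z' \<in> K" unfolding K_def by simp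
    hence "f z' \<le> \<mu>" using mx \<mu>_def by blast
    moreover have "f z' = inner z (A *v z) / (norm z)^2"
      unfolding f_def z'_def by (simp add: mv_scaleR power2_eq_square)
    ultimately have "inner z (A *v z) \<le> \<mu> * (norm z)^2"
      using False by (simp add: divide_le_eq)
    thus ?thesis by (simp add: power2_norm_eq_inner)
  qed
  have orth: "inner y (A *v x0 - \<mu> *\<^sub>R x0) = 0" if yS: "y \<in> S" for y
  proof -
    have "\<And>t. 0 \<le> (\<mu> * inner y y - inner y (A *v y)) * t^2 + 2 * (\<mu> * inner y x0 - inner y (A *v x0)) * t"
    proof -
      fix t :: real
      have "x0 + t *\<^sub>R y \<in> S" using x0S yS unfolding memS
        by (simp add: cinner_add_right cinner_scaleR_right)
      from bound[OF this] have "inner (x0 + t *\<^sub>R y) (A *v (x0 + t *\<^sub>R y)) \<le> \<mu> * inner (x0 + t *\<^sub>R y) (x0 + t *\<^sub>R y)" .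
      moreover have "inner (x0 + t *\<^sub>R y) (x0 + t *\<^sub>R y) = inner x0 x0 + 2 * t * inner y x0 + t^2 * inner y y"
        by (simp add: inner_add_left inner_add_right inner_commute[of x0 y] power2_eq_square algebra_simps)
      moreover have "inner x0 x0 = 1" using nx0 by (simp add: power2_norm_eq_inner[symmetric])
      moreover have "inner x0 (A *v x0) = \<mu>" using \<mu>_def f_def by simp
      ultimately show "0 \<le> (\<mu> * inner y y - inner y (A *v y)) * t^2 + 2 * (\<mu> * inner y x0 - inner y (A *v x0)) * t"
        unfolding herm_expand[OF h] by (simp add: algebra_simps power2_eq_square inner_commute[of x0 y])
    qed
    from quad_nonneg_lin0[OF this] show ?thesis by (simp add: inner_diff_right)
  qed
  define r where "r = A *v x0 - \<mu> *\<^sub>R x0"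
  have rS: "r \<in> S" unfolding memS
  proof
    fix u assume uU: "u \<in> U"
    have "cinner u (A *v x0) = cinner (A *v u) x0" by (rule herm_cinner[OF h])
    also have "\<dots> = complex_of_real (inner u (A *v u)) * cinner u x0"
      using e uU unfolding eig_def by (metis cinner_scaleR_left)
    also have "\<dots> = 0" using x0S uU memS by simp
    finally show "cinner u r = 0" using x0S uU memS
      by (simp add: r_def cinner_diff_right cinner_scaleR_right)
  qed
  have "inner r r = 0" using orth[OF rS] r_def by simp
  hence "r = 0" by simp
  hence "A *v x0 = inner x0 (A *v x0) *\<^sub>R x0" using r_def \<mu>_def f_def by simp
  thus ?thesis using nx0 x0S memS by blast
qed

lemma eig_exists:
  assumes h: "hermitian_mat (A::complex^'n^'n)"
  shows "k \<le> CARD('n) \<Longrightarrow> \<exists>U. onb U \<and> eig A U \<and> card U = k"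
proof (induction k)
  case 0
  have "onb {}" "eig A {}" by (simp_all add: onb_def eig_def)
  thus ?case by force
next
  case (Suc k)
  then obtain U where o: "onb U" and e: "eig A U" and c: "card U = k" by auto
  have f: "finite U" using onb_card[OF o] by simp
  have "card U < CARD('n)" using c Suc.prems by simp
  from rayleigh[OF h o e onb_extend[OF o this]] obtain x where
    x: "norm x = 1" "\<forall>u\<in>U. cinner u x = 0" "A *v x = inner x (A *v x) *\<^sub>R x" by blast
  from onb_insert[OF o x(1) x(2)] have "onb (insert x U)" "x \<notin> U" by auto
  moreover have "eig A (insert x U)" using e x(3) unfolding eig_def by simp
  moreover have "card (insert x U) = Suc k" using f c \<open>x \<notin> U\<close> by simp
  ultimately show ?case by blast
qed



lemma mv_sum: "finite S \<Longrightarrow> A *v (\<Sum>u\<in>S. f u) = (\<Sum>u\<in>S. A *v (f u :: complex^'n))" for A :: "complex^'n^'m"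
  by (induction S rule: finite_induct) (auto simp: matrix_vector_right_distrib)

lemma mult_cnj_sq: "z * cnj z = (complex_of_real (cmod z))^2"
  by (metis complex_norm_square of_real_power)

lemma psd_sqrt_exists:
  assumes p: "pos_semidef_mat (A::complex^'n^'n)"
  shows "\<exists>B. pos_semidef_mat B \<and> B ** B = A"
proof -
  have h: "hermitian_mat A" using p psd_herm by blast
  obtain U where o: "onb U" and e: "eig A U" and c: "card U = CARD('n)"
    using eig_exists[OF h order_refl] by blast
  have f: "finite U" using onb_card[OF o] by simp
  define s where "s = (\<lambda>u. complex_of_real (sqrt (inner u (A *v u))))"
  have s2: "s u * s u = complex_of_real (inner u (A *v u))" for u
  proof -
    have "sqrt (inner u (A *v u)) * sqrt (inner u (A *v u)) = inner u (A *v u)"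
      using psd_nonneg[OF p, of u] by simp
    thus ?thesis unfolding s_def by (metis of_real_mult)
  qed
  have cs: "cnj (s u) = s u" for u by (simp add: s_def)
  define B where "B = (\<chi> i k. \<Sum>u\<in>U. s u * u$i * cnj (u$k))"
  have Bv: "B *v x = (\<Sum>u\<in>U. (s u * cinner u x) *s u)" for x
  proof -
    have "(B *v x) $ i = (\<Sum>u\<in>U. (s u * cinner u x) *s u) $ i" for i
    proof -
      have "(B *v x) $ i = (\<Sum>k\<in>UNIV. \<Sum>u\<in>U. s u * u$i * cnj (u$k) * x$k)"
        by (simp add: B_def matrix_vector_mult_def sum_distrib_right)
      also have "\<dots> = (\<Sum>u\<in>U. \<Sum>k\<in>UNIV. s u * u$i * cnj (u$k) * x$k)" by (rule sum.swap)
      also have "\<dots> = (\<Sum>u\<in>U. ((s u * cinner u x) *s u) $ i)"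
        by (intro sum.cong refl) (simp add: cinner_def sum_distrib_left sum_distrib_right mult_ac)
      also have "\<dots> = (\<Sum>u\<in>U. (s u * cinner u x) *s u) $ i" by (simp add: sum_component)
      finally show ?thesis .
    qed
    thus ?thesis by (simp add: vec_eq_iff)
  qed
  have BB: "B ** B = A"
  proof (rule mat_eq_cols)
    fix x
    have "(B ** B) *v x = B *v (B *v x)" by (simp add: matrix_vector_mul_assoc)
    also have "\<dots> = (\<Sum>u\<in>U. (s u * (s u * cinner u x)) *s u)"
      unfolding Bv[of "B *v x"] by (intro sum.cong refl) (simp add: Bv onb_coeff[OF o f])
    also have "\<dots> = (\<Sum>u\<in>U. cinner u x *s (A *v u))"
    proof (intro sum.cong refl)
      fix u assume "u \<in> U"
      hence "A *v u = inner u (A *v u) *\<^sub>R u" using e eig_def by blast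
      hence "\<And>i. (A *v u)$i = complex_of_real (inner u (A *v u)) * u$i"
        by (metis vector_scaleR_component scaleR_conv_of_real)
      thus "(s u * (s u * cinner u x)) *s u = cinner u x *s (A *v u)"
        using s2[of u] by (simp add: vec_eq_iff mult_ac)
    qed
    also have "\<dots> = A *v (\<Sum>u\<in>U. cinner u x *s u)" by (simp add: mv_sum[OF f] mv_smult)
    also have "\<dots> = A *v x" using onb_complete[OF o c, of x] by simp
    finally show "(B ** B) *v x = A *v x" .
  qed
  have hB: "hermitian_mat B"
    unfolding hermitian_mat_def adjoint_mat_def B_def
    by (simp add: vec_eq_iff cs mult_ac)
  have "0 \<le> Re (cinner x (B *v x))" for x
  proof -
    have "cinner x (B *v x) = (\<Sum>u\<in>U. s u * (cinner u x * cnj (cinner u x)))"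
      unfolding Bv by (simp add: cinner_sum_right[OF f] cinner_smult_right mult_ac cinner_commute[of u x for u])
    also have "\<dots> = (\<Sum>u\<in>U. complex_of_real (sqrt (inner u (A *v u)) * (cmod (cinner u x))^2))"
      by (intro sum.cong refl) (simp add: s_def mult_cnj_sq)
    finally show ?thesis
      by (simp add: Re_sum) (intro sum_nonneg mult_nonneg_nonneg real_sqrt_ge_zero psd_nonneg[OF p] zero_le_power2)
  qed
  hence "pos_semidef_mat B" using hB by (simp add: pos_semidef_mat_def)
  thus ?thesis using BB by blast
qed

lemma msqrt_props:
  assumes p: "pos_semidef_mat (A::complex^'n^'n)"
  shows "pos_semidef_mat (msqrt A)" "msqrt A ** msqrt A = A"
proof -
  have "\<exists>!B. pos_semidef_mat B \<and> B ** B = A"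
    using psd_sqrt_exists[OF p] psd_sqrt_unique by metis
  from theI'[OF this] show "pos_semidef_mat (msqrt A)" "msqrt A ** msqrt A = A"
    unfolding msqrt_def by auto
qed

lemma msqrt_norm:
  assumes p: "pos_semidef_mat (A::complex^'n^'n)"
  shows "(norm (msqrt A *v x))^2 = inner x (A *v x)"
proof -
  have h: "hermitian_mat (msqrt A)" using msqrt_props(1)[OF p] psd_herm by blast
  have "(norm (msqrt A *v x))^2 = inner (msqrt A *v x) (msqrt A *v x)" by (simp add: power2_norm_eq_inner)
  also have "\<dots> = inner x (msqrt A *v (msqrt A *v x))" using herm_inner[OF h] by simp
  also have "\<dots> = inner x (A *v x)" by (simp add: matrix_vector_mul_assoc msqrt_props(2)[OF p])
  finally show ?thesis .
qed



lemma Wint_pd: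
  assumes mw: "matrix_weight (W :: real \<Rightarrow> complex^'n^'n)" and cd: "c < d"
  shows "pos_def_mat (Wint W {c..<d})"
proof -
  define I where "I = {c..<d}"
  define F where "F = (\<lambda>i k x. indicator I x *\<^sub>R (W x $ i $ k))"
  have intF: "integrable lborel (F i k)" for i k
  proof -
    have "set_integrable lborel {c..d} (\<lambda>x. W x $ i $ k)" using mw matrix_weight_def by blast
    hence "set_integrable lborel I (\<lambda>x. W x $ i $ k)"
      by (rule set_integrable_subset) (auto simp: I_def)
    thus ?thesis unfolding set_integrable_def F_def .
  qed
  have mF: "F i k \<in> borel_measurable borel" for i k
    using borel_measurable_integrable[OF intF[of i k]] by simp
  have mFc: "(\<lambda>x. cnj (F i k x)) \<in> borel_measurable borel" for i k
  proof -
    have "cnj \<in> borel_measurable borel"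
      by (intro borel_measurable_continuous_onI continuous_on_cnj continuous_on_id)
    from measurable_compose[OF mF[of i k] this] show ?thesis by simp
  qed
  have WF: "Wint W I $ i $ k = integral\<^sup>L lborel (F i k)" for i k
    by (simp add: Wint_def set_lebesgue_integral_def F_def)
  have AEpd: "AE x in lborel. pos_def_mat (W x)" using mw matrix_weight_def by blast
  have herm: "hermitian_mat (Wint W I)"
  proof -
    have "cnj (Wint W I $ k $ i) = Wint W I $ i $ k" for i k
    proof -
      have "cnj (Wint W I $ k $ i) = integral\<^sup>L lborel (\<lambda>x. cnj (F k i x))"
        unfolding WF by simp
      also have "\<dots> = integral\<^sup>L lborel (F i k)"
      proof (rule integral_cong_AE)
        show "AE x in lborel. cnj (F k i x) = F i k x"
          using AEpd
        proof eventually_elim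
          fix x assume "pos_def_mat (W x)"
          hence "adjoint_mat (W x) = W x" by (simp add: pos_def_mat_def hermitian_mat_def)
          moreover have "(adjoint_mat (W x)) $ i $ k = cnj (W x $ k $ i)" by (simp add: adjoint_mat_def)
          ultimately have "cnj (W x $ k $ i) = W x $ i $ k" by simp
          thus "cnj (F k i x) = F i k x" by (simp add: F_def scaleR_conv_of_real)
        qed
      qed (simp_all add: mF mFc)
      finally show ?thesis using WF by simp
    qed
    thus ?thesis by (simp add: hermitian_mat_def adjoint_mat_def vec_eq_iff)
  qed
  have pos: "0 < Re (cinner v (Wint W I *v v))" if "v \<noteq> 0" for v
  proof -
    define G where "G = (\<lambda>x. \<Sum>i\<in>UNIV. \<Sum>k\<in>UNIV. cnj (v $ i) * (F i k x * v $ k))"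
    have intT: "integrable lborel (\<lambda>x. cnj (v $ i) * (F i k x * v $ k))" for i k
      by (intro integrable_mult_right integrable_mult_left intF)
    have intG: "integrable lborel G" unfolding G_def
      by (rule Bochner_Integration.integrable_sum, rule Bochner_Integration.integrable_sum, rule intT)
    have "cinner v (Wint W I *v v) = (\<Sum>i\<in>UNIV. \<Sum>k\<in>UNIV. cnj (v $ i) * (integral\<^sup>L lborel (F i k) * v $ k))"
      by (simp add: cinner_def matrix_vector_mult_def WF sum_distrib_left)
    also have "\<dots> = integral\<^sup>L lborel G"
      unfolding G_def
      by (simp add: Bochner_Integration.integral_sum intT Bochner_Integration.integrable_sum integral_mult_right_zero integral_mult_left_zero)
    finally have eq: "cinner v (Wint W I *v v) = integral\<^sup>L lborel G" .
    have GR: "Re (G x) = indicator I x * Re (cinner v (W x *v v))" for x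
    proof -
      have "G x = complex_of_real (indicator I x) * cinner v (W x *v v)"
        by (simp add: G_def F_def cinner_def matrix_vector_mult_def sum_distrib_left scaleR_conv_of_real mult_ac)
      thus ?thesis by simp
    qed
    have "Re (integral\<^sup>L lborel G) = integral\<^sup>L lborel (\<lambda>x. Re (G x))"
      using integral_Re[OF intG] by simp
    have nn: "AE x in lborel. 0 \<le> Re (G x)"
      using AEpd
    proof eventually_elim
      fix x assume "pos_def_mat (W x)"
      hence "0 < Re (cinner v (W x *v v))" using \<open>v \<noteq> 0\<close> pos_def_mat_def by blast
      thus "0 \<le> Re (G x)" unfolding GR by simp
    qed
    have ge: "0 \<le> integral\<^sup>L lborel (\<lambda>x. Re (G x))" by (rule integral_nonneg_AE[OF nn])
    have ne: "integral\<^sup>L lborel (\<lambda>x. Re (G x)) \<noteq> 0"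
    proof
      assume "integral\<^sup>L lborel (\<lambda>x. Re (G x)) = 0"
      hence "AE x in lborel. Re (G x) = 0"
        using integral_nonneg_eq_0_iff_AE[OF integrable_Re[OF intG] nn] by simp
      hence "AE x in lborel. x \<notin> I"
        using AEpd
      proof eventually_elim
        fix x assume "Re (G x) = 0" "pos_def_mat (W x)"
        hence "0 < Re (cinner v (W x *v v))" using \<open>v \<noteq> 0\<close> pos_def_mat_def by blast
        thus "x \<notin> I" using \<open>Re (G x) = 0\<close> unfolding GR by (auto simp: indicator_def)
      qed
      hence "emeasure lborel I = 0"
        by (subst (asm) AE_iff_measurable[of I]) (auto simp: I_def)
      moreover have "emeasure lborel I = ennreal (d - c)" using cd by (simp add: I_def)
      ultimately show False using cd by simp
    qed
    show ?thesis using eq ge ne integral_Re[OF intG] by simp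
  qed
  show ?thesis unfolding pos_def_mat_def I_def[symmetric] using herm pos by blast
qed



lemma Wint_split:
  assumes mw: "matrix_weight (W :: real \<Rightarrow> complex^'n^'n)" and am: "a \<le> m" and mb: "m \<le> b"
  shows "Wint W {a..<b} = Wint W {a..<m} + Wint W {m..<b}"
proof -
  have si: "set_integrable lborel S (\<lambda>x. W x $ i $ k)" if "S \<subseteq> {a..b}" "S \<in> sets lborel" for S i k
  proof -
    have "set_integrable lborel {a..b} (\<lambda>x. W x $ i $ k)" using mw matrix_weight_def by blast
    thus ?thesis by (rule set_integrable_subset) (use that in auto)
  qed
  have "{a..<b} = {a..<m} \<union> {m..<b}" using am mb by auto
  moreover have "{a..<m} \<inter> {m..<b} = {}" by auto
  ultimately have "(LINT x:{a..<b}|lborel. W x $ i $ k) = (LINT x:{a..<m}|lborel. W x $ i $ k) + (LINT x:{m..<b}|lborel. W x $ i $ k)" for i k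
  proof -
    have s1: "{a..<m} \<subseteq> {a..b}" "{m..<b} \<subseteq> {a..b}" using am mb by auto
    have "set_integrable lborel {a..<m} (\<lambda>x. W x $ i $ k)" "set_integrable lborel {m..<b} (\<lambda>x. W x $ i $ k)"
      using si[OF s1(1)] si[OF s1(2)] by auto
    from set_integral_Un[OF _ this] \<open>{a..<b} = {a..<m} \<union> {m..<b}\<close> show ?thesis by simp
  qed
  thus ?thesis by (simp add: Wint_def vec_eq_iff)
qed

lemma norm_bound_aux:
  fixes S :: "complex^'n^'n"
  assumes "norm (S *v y) \<le> w" "0 \<le> w"
  shows "norm (S *v (complex_of_real (inverse w) *s (y::complex^'n))) \<le> 1"
proof -
  have e: "complex_of_real (inverse w) *s y = inverse w *\<^sub>R y"
    unfolding vec_eq_iff vector_scaleR_component vector_smult_component by (simp add: scaleR_conv_of_real)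
  show ?thesis unfolding e mv_scaleR using assms
    by (cases "w = 0") (auto simp: field_simps)
qed

lemma mvneg: "A *v (- v) = - (A *v v)" for A :: "complex^'n^'n"
  by (metis diff_0 matrix_vector_mult_0_right matrix_vector_mult_diff_distrib)

lemma main_bound:
  fixes v :: "complex^'n"
  assumes pA: "pos_def_mat (A::complex^'n^'n)" and pB: "pos_def_mat B"
  defines "M \<equiv> (A + B) ** matrix_inv B ** A"
  defines "w \<equiv> norm (msqrt M *v v)"
  shows "norm (msqrt A *v (complex_of_real (inverse w) *s (- v))) \<le> 1"
    "norm (msqrt B *v (complex_of_real (inverse w) *s (matrix_inv B ** A *v v))) \<le> 1"
proof -
  define N where "N = matrix_inv B"
  have iB: "invertible B" using pd_invertible[OF pB] .
  have BN: "B ** N = mat 1" using inv_props(1)[OF iB] N_def by simp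
  have hA: "hermitian_mat A" using pA pd_psd psd_herm by blast
  have hB: "hermitian_mat B" using pB pd_psd psd_herm by blast
  have hN: "hermitian_mat N" using herm_inv[OF hB iB] N_def by simp
  have Nnn: "0 \<le> inner y (N *v y)" for y
  proof -
    have "y = B *v (N *v y)" using BN by (simp add: matrix_vector_mul_assoc)
    hence "inner y (N *v y) = inner (B *v (N *v y)) (N *v y)" by simp
    also have "\<dots> = inner (N *v y) (B *v (N *v y))" by (simp add: inner_commute)
    finally show ?thesis using psd_nonneg[OF pd_psd[OF pB]] by simp
  qed
  have Mx: "M *v x = A *v (N *v (A *v x)) + A *v x" for x
  proof -
    have "M *v x = (A + B) *v (N *v (A *v x))" by (simp add: M_def N_def matrix_vector_mul_assoc[symmetric])
    also have "\<dots> = A *v (N *v (A *v x)) + B *v (N *v (A *v x))" by (simp add: matrix_vector_mult_add_rdistrib)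
    also have "B *v (N *v (A *v x)) = A *v x"
      by (metis BN matrix_vector_mul_assoc matrix_vector_mul_lid)
    finally show ?thesis .
  qed
  have q: "inner x (M *v x) = inner (A *v x) (N *v (A *v x)) + inner x (A *v x)" for x
    unfolding Mx inner_add_right using herm_inner[OF hA] by simp
  have hM: "hermitian_mat M"
  proof -
    have eqM: "M = A ** N ** A + A"
      by (rule mat_eq_cols) (simp add: Mx matrix_vector_mult_add_rdistrib matrix_vector_mul_assoc[symmetric])
    have "adjoint_mat (A ** N ** A) = A ** N ** A"
      using hA hN by (simp add: adjoint_mult hermitian_mat_def matrix_mul_assoc)
    moreover have "adjoint_mat (X + Y) = adjoint_mat X + adjoint_mat Y" for X Y :: "complex^'n^'n"
      by (simp add: adjoint_mat_def vec_eq_iff)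
    ultimately show ?thesis using hA unfolding eqM hermitian_mat_def by simp
  qed
  have pM: "pos_semidef_mat M"
    unfolding pos_semidef_mat_def using hM q Nnn psd_nonneg[OF pd_psd[OF pA]]
    by (simp add: inner_cinner[symmetric] add_nonneg_nonneg)
  have w2: "w^2 = inner v (M *v v)" using msqrt_norm[OF pM] w_def by simp
  have w0: "0 \<le> w" using w_def by simp
  have b1: "norm (msqrt A *v (- v)) \<le> w"
  proof -
    have "(norm (msqrt A *v (- v)))^2 = inner v (A *v v)"
      using msqrt_norm[OF pd_psd[OF pA], of "- v"] mvneg[of A v] by simp
    also have "\<dots> \<le> w^2" using w2 q[of v] Nnn[of "A *v v"] by simp
    finally show ?thesis using w0 by (simp add: power2_le_iff_abs_le)
  qed
  have b2: "norm (msqrt B *v (N ** A *v v)) \<le> w"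
  proof -
    have "(norm (msqrt B *v (N ** A *v v)))^2 = inner (N *v (A *v v)) (B *v (N *v (A *v v)))"
      using msqrt_norm[OF pd_psd[OF pB], of "N *v (A *v v)"] matrix_vector_mul_assoc[of N A v] by simp
    also have "\<dots> = inner (A *v v) (N *v (A *v v))"
    proof -
      have "B *v (N *v (A *v v)) = A *v v" by (metis BN matrix_vector_mul_assoc matrix_vector_mul_lid)
      thus ?thesis by (simp add: inner_commute)
    qed
    also have "\<dots> \<le> w^2" using w2 q[of v] psd_nonneg[OF pd_psd[OF pA], of v] by simp
    finally show ?thesis using w0 by (simp add: power2_le_iff_abs_le)
  qed
  show "norm (msqrt A *v (complex_of_real (inverse w) *s (- v))) \<le> 1"
    by (rule norm_bound_aux[OF b1 w0])
  show "norm (msqrt B *v (complex_of_real (inverse w) *s (matrix_inv B ** A *v v))) \<le> 1"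
    using norm_bound_aux[OF b2 w0] N_def by simp
qed



theorem lemma2p3:
  shows "\<exists>C::real. \<forall>W :: real \<Rightarrow> complex^'n^'n. \<forall>J v j.
     matrix_weight W \<longrightarrow> J \<in> dyadic_grid \<longrightarrow>
     orthonormal_eigenbasis (haar_mat W J) v \<longrightarrow>
       norm (msqrt (Wint W (left_half J)) *v haar_minus W J v j) \<le> C \<and>
       norm (msqrt (Wint W (right_half J)) *v haar_plus W J v j) \<le> C"
proof (intro exI[of _ 1] allI impI)
  fix W :: "real \<Rightarrow> complex^'n^'n" and J v j
  assume mw: "matrix_weight W" and J: "J \<in> dyadic_grid"
  obtain n k where Jd: "J = dyadic_interval n k" using J dyadic_grid_def by blast
  define p :: real where "p = 2 powr (- real_of_int n)"
  define a where "a = real_of_int k * p"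
  define b where "b = (real_of_int k + 1) * p"
  have pp: "0 < p" by (simp add: p_def)
  have ab: "a < b" using pp by (simp add: a_def b_def algebra_simps)
  have JI: "J = {a..<b}" by (simp add: Jd dyadic_interval_def a_def b_def p_def)
  define m where "m = (a + b) / 2"
  have am: "a < m" and mb: "m < b" using ab by (auto simp: m_def)
  have L: "left_half J = {a..<m}" using ab by (simp add: left_half_def JI m_def)
  have R: "right_half J = {m..<b}" using ab by (simp add: right_half_def JI m_def)
  have pA: "pos_def_mat (Wint W (left_half J))" unfolding L by (rule Wint_pd[OF mw am])
  have pB: "pos_def_mat (Wint W (right_half J))" unfolding R by (rule Wint_pd[OF mw mb])
  have sp: "Wint W J = Wint W (left_half J) + Wint W (right_half J)"
  proof -
    have "Wint W {a..<b} = Wint W {a..<m} + Wint W {m..<b}" using Wint_split[OF mw] am mb by simp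
    thus ?thesis unfolding L R by (simp add: JI)
  qed
  have hm: "haar_mat W J = (Wint W (left_half J) + Wint W (right_half J)) ** matrix_inv (Wint W (right_half J)) ** Wint W (left_half J)"
    unfolding haar_mat_def sp ..
  note mb2 = main_bound[OF pA pB, of "v j", folded hm]
  show "norm (msqrt (Wint W (left_half J)) *v haar_minus W J v j) \<le> 1 \<and>
        norm (msqrt (Wint W (right_half J)) *v haar_plus W J v j) \<le> 1"
    using mb2 unfolding haar_minus_def haar_plus_def haar_w_def by simp
qed

end
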